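(* Let $(N,m)$ be a marked P/T net, let $\mathcal U[N,m]=(O,m_0)$ be its unfolding with folding morphism $(f_S,f_T)$, and let $\overleftarrow{(N,m)}=(\overleftarrow O,m_0)$ be its reversible version. Then for every marking $m'$ of $N$: $(N,m)\to^*(N,m')$ if and only if there exists a marking $m''$ of $O$ with $(\overleftarrow O,m_0)\to^*(\overleftarrow O,m'')$ (any finite sequence of forward and backward firings) and $m'=f_S(m'')$.
   Context: A P/T net $N=(S_N,T_N,{}^\bullet\_,\_^\bullet)$ has disjoint sets of places and transitions and functions assigning to each transition a nonempty preset ${}^\bullet\mathsf t$ and nonempty postset $\mathsf t^\bullet$, both multisets over $S_N$. Markings are multisets over $S_N$; firing rule: if ${}^\bullet\mathsf t=m_1$, $\mathsf t^\bullet=m_2$ then $(N,m_1\oplus m_3)\xrightarrow{\mathsf t}(N,m_2\oplus m_3)$; $\to^*$ is a finite sequence of firings. Causality $\preceq$, conflict $\#$ and concurrency $co$ on places and transitions of a net: $\prec=\{(a,\mathsf t)\mid a\in{}^\bullet\mathsf t\}\cup\{(\mathsf t,a)\mid a\in\mathsf t^\bullet\}$, $\preceq$ its reflexive-transitive closure; $x\#y$ iff there are transitions $\mathsf t_1\preceq x$, $\mathsf t_2\preceq y$, $\mathsf t_1\ne\mathsf t_2$, with ${}^\bullet\mathsf t_1\cap{}^\bullet\mathsf t_2\ne\emptyset$; $x\ co\ y$ iff $x\ne y$, $x\not\preceq y$, $y\not\preceq x$, not $x\#y$; a set $X$ satisfies $CO(X)$ iff its elements are pairwise $co$ and only finitely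 many transitions $\mathsf t$ satisfy $\mathsf t\preceq x$ for some $x\in X$. The unfolding $\mathcal U[N,m]=(S,T,{}^\bullet\_,\_^\bullet)$ is the least net such that: (i) if $m(a)=n$ then the places $a(\emptyset,i)$, $1\le i\le n$, are in $S$; (ii) if $H=\{a_j(h_j,i_j)\mid j\in J\}\subseteq S$ with $CO(H)$, $\mathsf t\in T_N$ and ${}^\bullet\mathsf t=\bigoplus_{j\in J}a_j$, then $\mathsf t(H)\in T$ with preset $H$; (iii) if $x=\mathsf t(H)\in T$ then the places $a(\{x\},i)$ for $1\le i\le\mathsf t^\bullet(a)$ are in $S$ and form the postset of $x$. Its initial marking $m_0$ is the set of places $a(\emptyset,i)$; it is an occurrence net. The folding morphism is $f_S(a(h,i))=a$, $f_T(\mathsf t(H))=\mathsf t$, extended to multisets. The reversible version $\overleftarrow O$ of $O$ has the same places, transitions $T_O\cup\{\underline{\mathsf t}\mid\mathsf t\in T_O\}$, forward transitions keep pre/postsets and ${}^\bullet\underline{\mathsf t}=\mathsf t^\bullet$, $\underline{\mathsf t}^\bullet={}^\bullet\mathsf t$; firings of transitions of $T_O$ are forward, of reverse transitions backward. The reversible version of $(N,m)$ is $\overleftarrow{\mathcal U[N,m]}$. *)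

theory Defs
  imports Main "HOL-Library.Multiset" "HOL-Library.FSet"
begin

record ('s, 't) net =
  places :: "'s set"
  trans  :: "'t set"
  pre    :: "'t \<Rightarrow> 's multiset"
  post   :: "'t \<Rightarrow> 's multiset"

definition wf_net :: "('s, 't) net \<Rightarrow> bool" where
  "wf_net N \<longleftrightarrow> (\<forall>t\<in>trans N. pre N t \<noteq> {#} \<and> post N t \<noteq> {#}
      \<and> set_mset (pre N t) \<subseteq> places N \<and> set_mset (post N t) \<subseteq> places N)"

definition is_marking :: "('s, 't) net \<Rightarrow> 's multiset \<Rightarrow> bool" where
  "is_marking N M \<longleftrightarrow> set_mset M \<subseteq> places N"

definition fires :: "('s, 't) net \<Rightarrow> 's multiset \<Rightarrow> 't \<Rightarrow> 's multiset \<Rightarrow> bool" where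
  "fires N M t M' \<longleftrightarrow> t \<in> trans N \<and> (\<exists>m3. M = pre N t + m3 \<and> M' = post N t + m3)"

definition step :: "('s, 't) net \<Rightarrow> 's multiset \<Rightarrow> 's multiset \<Rightarrow> bool" where
  "step N M M' \<longleftrightarrow> (\<exists>t. fires N M t M')"

definition reach :: "('s, 't) net \<Rightarrow> 's multiset \<Rightarrow> 's multiset \<Rightarrow> bool" where
  "reach N = (step N)\<^sup>*\<^sup>*"

section \<open>Causality, conflict, concurrency (nodes: Inl = place, Inr = transition)\<close>

definition prec :: "('s, 't) net \<Rightarrow> (('s + 't) \<times> ('s + 't)) set" where
  "prec N = {(Inl a, Inr t) | a t. t \<in> trans N \<and> a \<in># pre N t}
          \<union> {(Inr t, Inl a) | a t. t \<in> trans N \<and> a \<in># post N t}"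

definition causal :: "('s, 't) net \<Rightarrow> (('s + 't) \<times> ('s + 't)) set" where
  "causal N = (prec N)\<^sup>*"

definition conflict :: "('s, 't) net \<Rightarrow> ('s + 't) \<Rightarrow> ('s + 't) \<Rightarrow> bool" where
  "conflict N x y \<longleftrightarrow> (\<exists>t1 t2. t1 \<in> trans N \<and> t2 \<in> trans N \<and>
      (Inr t1, x) \<in> causal N \<and> (Inr t2, y) \<in> causal N \<and> t1 \<noteq> t2 \<and>
      set_mset (pre N t1) \<inter> set_mset (pre N t2) \<noteq> {})"

definition co :: "('s, 't) net \<Rightarrow> ('s + 't) \<Rightarrow> ('s + 't) \<Rightarrow> bool" where
  "co N x y \<longleftrightarrow> x \<noteq> y \<and> (x, y) \<notin> causal N \<and> (y, x) \<notin> causal N \<and> \<not> conflict N x y"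

definition CO :: "('s, 't) net \<Rightarrow> ('s + 't) set \<Rightarrow> bool" where
  "CO N X \<longleftrightarrow> (\<forall>x\<in>X. \<forall>y\<in>X. x \<noteq> y \<longrightarrow> co N x y)
      \<and> finite {t \<in> trans N. \<exists>x\<in>X. (Inr t, x) \<in> causal N}"

text \<open>Places a(h,i) with h = \<emptyset> (None) or h = {x} (Some x); transitions t(H).\<close>
datatype ('s, 't) uplace = UPl 's "('s, 't) utrans option" nat
     and ('s, 't) utrans = UTr 't "('s, 't) uplace fset"

fun fS :: "('s, 't) uplace \<Rightarrow> 's" where
  "fS (UPl a h i) = a"

fun fT :: "('s, 't) utrans \<Rightarrow> 't" where
  "fT (UTr t H) = t"

fun upre :: "('s, 't) utrans \<Rightarrow> ('s, 't) uplace multiset" where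
  "upre (UTr t H) = mset_set (fset H)"

fun upost :: "('s, 't) net \<Rightarrow> ('s, 't) utrans \<Rightarrow> ('s, 't) uplace multiset" where
  "upost N (UTr t H) =
     mset_set {UPl a (Some (UTr t H)) i | a i. 1 \<le> i \<and> i \<le> count (post N t) a}"

text \<open>Causal predecessors of a term are determined by its syntax, so causality, conflict
  and CO of elements of the unfolding computed here coincide with those computed
  inside the unfolding itself.\<close>
definition usyn :: "('s, 't) net \<Rightarrow> (('s, 't) uplace, ('s, 't) utrans) net" where
  "usyn N = \<lparr>places = UNIV, trans = UNIV, pre = upre, post = upost N\<rparr>"

inductive uplc :: "('s, 't) net \<Rightarrow> 's multiset \<Rightarrow> ('s, 't) uplace \<Rightarrow> bool"
  and utr :: "('s, 't) net \<Rightarrow> 's multiset \<Rightarrow> ('s, 't) utrans \<Rightarrow> bool"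
  for N :: "('s, 't) net" and m :: "'s multiset" where
  init: "1 \<le> i \<Longrightarrow> i \<le> count m a \<Longrightarrow> uplc N m (UPl a None i)"
| tr: "(\<forall>p. p |\<in>| H \<longrightarrow> uplc N m p) \<Longrightarrow> CO (usyn N) (Inl ` fset H) \<Longrightarrow>
       t \<in> trans N \<Longrightarrow> pre N t = image_mset fS (mset_set (fset H)) \<Longrightarrow> utr N m (UTr t H)"
| postp: "utr N m (UTr t H) \<Longrightarrow> 1 \<le> i \<Longrightarrow> i \<le> count (post N t) a \<Longrightarrow>
       uplc N m (UPl a (Some (UTr t H)) i)"

definition unfold :: "('s, 't) net \<Rightarrow> 's multiset \<Rightarrow> (('s, 't) uplace, ('s, 't) utrans) net" where
  "unfold N m = \<lparr>places = {p. uplc N m p}, trans = {x. utr N m x}, pre = upre, post = upost N\<rparr>"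

definition uinit :: "'s multiset \<Rightarrow> ('s, 't) uplace multiset" where
  "uinit m = mset_set {UPl a None i | a i. 1 \<le> i \<and> i \<le> count m a}"

section \<open>Reversible version (Inl t = forward t, Inr t = reverse of t)\<close>

definition rev_net :: "('p, 'u) net \<Rightarrow> ('p, 'u + 'u) net" where
  "rev_net Q = \<lparr>places = places Q, trans = Inl ` trans Q \<union> Inr ` trans Q,
     pre = (\<lambda>x. case x of Inl t \<Rightarrow> pre Q t | Inr t \<Rightarrow> post Q t),
     post = (\<lambda>x. case x of Inl t \<Rightarrow> post Q t | Inr t \<Rightarrow> pre Q t)\<rparr>"

end

theory Submission
  imports Defs
begin


fun hist :: "('s, 't) uplace \<Rightarrow> ('s, 't) utrans option" where
  "hist (UPl a h i) = h"

fun uH :: "('s, 't) utrans \<Rightarrow> ('s, 't) uplace fset" where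
  "uH (UTr t H) = H"

definition preS :: "('s, 't) utrans \<Rightarrow> ('s, 't) uplace set" where
  "preS e = fset (uH e)"

definition postS :: "('s, 't) net \<Rightarrow> ('s, 't) utrans \<Rightarrow> ('s, 't) uplace set" where
  "postS N e = set_mset (upost N e)"

definition pairs :: "'a multiset \<Rightarrow> ('a \<times> nat) set" where
  "pairs M = {(a, i). 1 \<le> i \<and> i \<le> count M a}"

lemma pairs_add: "pairs (add_mset x M) = insert (x, Suc (count M x)) (pairs M)"
  unfolding pairs_def by (auto split: if_splits)

lemma pairs_empty: "pairs {#} = {}"
  unfolding pairs_def by auto

lemma finite_pairs: "finite (pairs M)"
  by (induction M) (auto simp: pairs_add pairs_empty)

lemma fst_pairs: "image_mset fst (mset_set (pairs M)) = M"
proof (induction M)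
  case empty then show ?case by (simp add: pairs_empty)
next
  case (add x M)
  have "(x, Suc (count M x)) \<notin> pairs M" unfolding pairs_def by auto
  then have "mset_set (pairs (add_mset x M)) = add_mset (x, Suc (count M x)) (mset_set (pairs M))"
    using finite_pairs[of M] \<open>(x, Suc (count M x)) \<notin> pairs M\<close> by (simp add: pairs_add mset_set.insert_remove)
  then show ?case using add by simp
qed

lemma upost_img: "upost N e = mset_set ((\<lambda>(a,i). UPl a (Some e) i) ` pairs (post N (fT e)))"
proof (cases e)
  case (UTr t H)
  have "{UPl a (Some (UTr t H)) i | a i. 1 \<le> i \<and> i \<le> count (post N t) a}
        = (\<lambda>(a,i). UPl a (Some (UTr t H)) i) ` pairs (post N t)"
    unfolding pairs_def by auto
  then show ?thesis using UTr by simp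
qed

lemma uinit_img: "uinit m = mset_set ((\<lambda>(a,i). UPl a None i) ` pairs m)"
proof -
  have "{UPl a None i | a i. 1 \<le> i \<and> i \<le> count m a}
        = (\<lambda>(a,i). UPl a None i) ` pairs m"
    unfolding pairs_def by auto
  then show ?thesis unfolding uinit_def by (rule arg_cong)
qed

lemma fold_mset_img:
  assumes "\<And>a i. fS (g (a, i)) = a" "inj g"
  shows "image_mset fS (mset_set (g ` pairs M)) = M"
proof -
  have "mset_set (g ` pairs M) = image_mset g (mset_set (pairs M))"
    using image_mset_mset_set[of g "pairs M"] assms(2) inj_on_subset by (metis finite_pairs subset_UNIV)
  then have "image_mset fS (mset_set (g ` pairs M)) = image_mset (fS \<circ> g) (mset_set (pairs M))"
    by (simp add: multiset.map_comp)
  also have "fS \<circ> g = fst" using assms(1) by (auto simp: fun_eq_iff)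
  finally show ?thesis using fst_pairs by simp
qed

lemma fold_upost: "image_mset fS (upost N e) = post N (fT e)"
  unfolding upost_img by (rule fold_mset_img) (auto simp: inj_def)

lemma fold_uinit: "image_mset fS (uinit m) = m"
  unfolding uinit_img by (rule fold_mset_img) (auto simp: inj_def)

lemma finite_postS_set: "finite ((\<lambda>(a,i). UPl a (Some e) i) ` pairs (post N (fT e)))"
  using finite_pairs by blast

lemma postS_eq: "postS N e = (\<lambda>(a,i). UPl a (Some e) i) ` pairs (post N (fT e))"
  unfolding postS_def upost_img by (rule finite_set_mset_mset_set[OF finite_postS_set])

lemma finite_postS: "finite (postS N e)"
  using postS_eq finite_postS_set by metis

lemma upost_eq: "upost N e = mset_set (postS N e)"
  unfolding postS_eq upost_img ..

lemma upre_eq: "upre e = mset_set (preS e)"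
  by (cases e) (simp add: preS_def)

lemma finite_preS: "finite (preS e)"
  by (simp add: preS_def)

definition Ini :: "'s multiset \<Rightarrow> ('s, 't) uplace set" where
  "Ini m = (\<lambda>(a,i). UPl a None i) ` pairs m"

lemma finite_Ini: "finite (Ini m)" unfolding Ini_def using finite_pairs by blast

lemma uinit_eq: "uinit m = mset_set (Ini m)"
  unfolding Ini_def uinit_img ..

lemma postS_hist: "p \<in> postS N e \<Longrightarrow> hist p = Some e"
  unfolding postS_eq by auto

lemma Ini_hist: "p \<in> Ini m \<Longrightarrow> hist p = None"
  unfolding Ini_def by auto

lemma preS_size: "p \<in> preS e \<Longrightarrow> size p < size e"
proof (cases e)
  case (UTr t H)
  assume "p \<in> preS e"
  then have p: "p \<in> fset H" using UTr by (simp add: preS_def)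
  have "size p < Suc (size p)" by simp
  also have "Suc (size p) \<le> (\<Sum>x\<in>fset H. Suc (size x))"
    using p by (intro member_le_sum) auto
  finally show ?thesis using UTr by (simp add: size_fset_simps)
qed

lemma postS_size: "p \<in> postS N e \<Longrightarrow> size e < size p"
  unfolding postS_eq by auto

lemma postS_iff: "UPl a (Some e) i \<in> postS N e \<longleftrightarrow> 1 \<le> i \<and> i \<le> count (post N (fT e)) a"
  unfolding postS_eq pairs_def by auto

lemma Ini_iff: "UPl a h i \<in> Ini m \<longleftrightarrow> h = None \<and> 1 \<le> i \<and> i \<le> count m a"
  unfolding Ini_def pairs_def by auto



definition Mk :: "('s, 't) net \<Rightarrow> 's multiset \<Rightarrow> ('s, 't) utrans set \<Rightarrow> ('s, 't) uplace set" where
  "Mk N m C = (Ini m \<union> (\<Union>e\<in>C. postS N e)) - (\<Union>e\<in>C. preS e)"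

definition config :: "('s, 't) net \<Rightarrow> 's multiset \<Rightarrow> ('s, 't) utrans set \<Rightarrow> bool" where
  "config N m C \<longleftrightarrow> finite C \<and> (\<forall>e\<in>C. utr N m e)
     \<and> (\<forall>e\<in>C. preS e \<subseteq> Ini m \<union> (\<Union>e'\<in>C. postS N e'))
     \<and> (\<forall>e1\<in>C. \<forall>e2\<in>C. e1 \<noteq> e2 \<longrightarrow> preS e1 \<inter> preS e2 = {})"

lemma finite_Mk: "finite C \<Longrightarrow> finite (Mk N m C)"
  unfolding Mk_def using finite_Ini finite_postS by blast

lemma postS_disj: "p \<in> postS N e \<Longrightarrow> p \<in> postS N e' \<Longrightarrow> e = e'"
  by (metis postS_hist option.inject)

lemma postS_Ini: "p \<in> postS N e \<Longrightarrow> p \<notin> Ini m"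
  using postS_hist Ini_hist by fastforce

lemma pre_post_disj: "p \<in> preS e \<Longrightarrow> p \<notin> postS N e"
  using preS_size postS_size by fastforce

lemma configD:
  assumes "config N m C"
  shows "finite C" "\<And>e. e \<in> C \<Longrightarrow> utr N m e"
    "\<And>e p. e \<in> C \<Longrightarrow> p \<in> preS e \<Longrightarrow> p \<in> Ini m \<or> (\<exists>e'\<in>C. p \<in> postS N e')"
    "\<And>e1 e2 p. e1 \<in> C \<Longrightarrow> e2 \<in> C \<Longrightarrow> e1 \<noteq> e2 \<Longrightarrow> p \<in> preS e1 \<Longrightarrow> p \<notin> preS e2"
  using assms unfolding config_def by blast+

lemma configI:
  assumes "finite C" "\<And>e. e \<in> C \<Longrightarrow> utr N m e"
    "\<And>e p. e \<in> C \<Longrightarrow> p \<in> preS e \<Longrightarrow> p \<in> Ini m \<or> (\<exists>e'\<in>C. p \<in> postS N e')"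
    "\<And>e1 e2 p. e1 \<in> C \<Longrightarrow> e2 \<in> C \<Longrightarrow> e1 \<noteq> e2 \<Longrightarrow> p \<in> preS e1 \<Longrightarrow> p \<notin> preS e2"
  shows "config N m C"
  unfolding config_def
proof (intro conjI ballI impI)
  show "finite C" by fact
  show "\<And>e. e \<in> C \<Longrightarrow> utr N m e" by fact
  fix e assume "e \<in> C" then show "preS e \<subseteq> Ini m \<union> (\<Union>e'\<in>C. postS N e')"
    using assms(3) by blast
next
  fix e1 e2 assume "e1 \<in> C" "e2 \<in> C" "e1 \<noteq> e2"
  then show "preS e1 \<inter> preS e2 = {}" using assms(4) by blast
qed

lemma Mk_iff: "p \<in> Mk N m C \<longleftrightarrow> (p \<in> Ini m \<or> (\<exists>e\<in>C. p \<in> postS N e)) \<and> (\<forall>e\<in>C. p \<notin> preS e)"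
  unfolding Mk_def by blast

lemma fwd:
  assumes c: "config N m C" and u: "utr N m e" and n: "e \<notin> C" and s: "preS e \<subseteq> Mk N m C"
  shows "config N m (insert e C) \<and> postS N e \<inter> Mk N m C = {}
     \<and> Mk N m (insert e C) = (Mk N m C - preS e) \<union> postS N e"
proof -
  note cd = configD[OF c]
  have d1: "\<And>p e'. p \<in> postS N e \<Longrightarrow> e' \<in> C \<Longrightarrow> p \<notin> preS e'"
  proof
    fix p e' assume p: "p \<in> postS N e" "e' \<in> C" "p \<in> preS e'"
    then have "p \<in> Ini m \<or> (\<exists>e'\<in>C. p \<in> postS N e')" using cd(3) by blast
    then show False using p n postS_Ini postS_disj by metis
  qed
  have d2: "postS N e \<inter> Mk N m C = {}"
  proof -
    { fix p assume p: "p \<in> postS N e" "p \<in> Mk N m C"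
      then have "p \<in> Ini m \<or> (\<exists>e\<in>C. p \<in> postS N e)" by (simp add: Mk_iff)
      then have False using p(1) postS_Ini postS_disj n by metis }
    then show ?thesis by blast
  qed
  have sM: "\<And>p. p \<in> preS e \<Longrightarrow> (p \<in> Ini m \<or> (\<exists>e\<in>C. p \<in> postS N e)) \<and> (\<forall>e\<in>C. p \<notin> preS e)"
    using s Mk_iff by (metis subsetD)
  have "config N m (insert e C)"
  proof (rule configI)
    show "finite (insert e C)" using cd(1) by simp
    show "\<And>e'. e' \<in> insert e C \<Longrightarrow> utr N m e'" using cd(2) u by blast
    show "\<And>e' p. e' \<in> insert e C \<Longrightarrow> p \<in> preS e' \<Longrightarrow> p \<in> Ini m \<or> (\<exists>e''\<in>insert e C. p \<in> postS N e'')"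
      using cd(3) sM by blast
    show "\<And>e1 e2 p. e1 \<in> insert e C \<Longrightarrow> e2 \<in> insert e C \<Longrightarrow> e1 \<noteq> e2 \<Longrightarrow> p \<in> preS e1 \<Longrightarrow> p \<notin> preS e2"
      using cd(4) sM by blast
  qed
  moreover have "Mk N m (insert e C) = (Mk N m C - preS e) \<union> postS N e"
  proof (rule set_eqI)
    fix p
    show "p \<in> Mk N m (insert e C) \<longleftrightarrow> p \<in> (Mk N m C - preS e) \<union> postS N e"
      using d1 pre_post_disj[of p e N] by (auto simp: Mk_iff)
  qed
  ultimately show ?thesis using d2 by blast
qed

lemma remove:
  assumes c: "config N m C" and e: "e \<in> C" and d: "\<And>p e'. p \<in> postS N e \<Longrightarrow> e' \<in> C \<Longrightarrow> p \<notin> preS e'"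
  shows "config N m (C - {e}) \<and> preS e \<subseteq> Mk N m (C - {e})"
proof -
  note cd = configD[OF c]
  have "config N m (C - {e})"
  proof (rule configI)
    show "finite (C - {e})" using cd(1) by simp
    show "\<And>e'. e' \<in> C - {e} \<Longrightarrow> utr N m e'" using cd(2) by blast
    fix e' p assume a: "e' \<in> C - {e}" "p \<in> preS e'"
    then have "p \<in> Ini m \<or> (\<exists>e''\<in>C. p \<in> postS N e'')" using cd(3) by blast
    moreover have "p \<notin> postS N e" using d a by blast
    ultimately show "p \<in> Ini m \<or> (\<exists>e''\<in>C - {e}. p \<in> postS N e'')" by blast
  next
    show "\<And>e1 e2 p. e1 \<in> C - {e} \<Longrightarrow> e2 \<in> C - {e} \<Longrightarrow> e1 \<noteq> e2 \<Longrightarrow> p \<in> preS e1 \<Longrightarrow> p \<notin> preS e2"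
      using cd(4) by blast
  qed
  moreover have "preS e \<subseteq> Mk N m (C - {e})"
  proof
    fix p assume p: "p \<in> preS e"
    then have "p \<in> Ini m \<or> (\<exists>e''\<in>C. p \<in> postS N e'')" using cd(3) e by blast
    moreover have "p \<notin> postS N e" using pre_post_disj p by blast
    moreover have "\<forall>e'\<in>C - {e}. p \<notin> preS e'" using cd(4) e p by blast
    ultimately show "p \<in> Mk N m (C - {e})" unfolding Mk_iff by blast
  qed
  ultimately show ?thesis by blast
qed

lemma back_step:
  assumes c: "config N m C" and e: "e \<in> C" and s: "postS N e \<subseteq> Mk N m C"
  shows "config N m (C - {e}) \<and> preS e \<inter> Mk N m C = {}
     \<and> Mk N m (C - {e}) = (Mk N m C - postS N e) \<union> preS e"
proof -
  have "\<And>p e'. p \<in> postS N e \<Longrightarrow> e' \<in> C \<Longrightarrow> p \<notin> preS e'"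
  proof -
    fix p e' assume "p \<in> postS N e" "e' \<in> C"
    then show "p \<notin> preS e'" using subsetD[OF s] by (simp add: Mk_iff)
  qed
  then have r: "config N m (C - {e})" "preS e \<subseteq> Mk N m (C - {e})" using remove c e by blast+
  have u: "utr N m e" using configD(2)[OF c e] .
  have f: "postS N e \<inter> Mk N m (C - {e}) = {}"
      "Mk N m (insert e (C - {e})) = (Mk N m (C - {e}) - preS e) \<union> postS N e"
    using fwd[OF r(1) u _ r(2)] by blast+
  have ie: "insert e (C - {e}) = C" using e by blast
  have "preS e \<inter> Mk N m C = {}" unfolding Mk_def using e by blast
  moreover have "Mk N m (C - {e}) = (Mk N m C - postS N e) \<union> preS e"
  proof -
    have A: "Mk N m C = (Mk N m (C - {e}) - preS e) \<union> postS N e" using f(2) ie by simp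
    have B: "postS N e \<inter> preS e = {}" using pre_post_disj by blast
    have "Mk N m C - postS N e = Mk N m (C - {e}) - preS e" using A f(1) B by blast
    then show ?thesis using r(2) by blast
  qed
  ultimately show ?thesis using r by blast
qed



inductive_cases utrE: "utr N m (UTr t H)"
inductive_cases uplcE: "uplc N m (UPl a h i)"

lemma utr_facts:
  assumes "utr N m e"
  shows "fT e \<in> trans N" "pre N (fT e) = image_mset fS (upre e)" "\<And>p. p \<in> preS e \<Longrightarrow> uplc N m p"
    "CO (usyn N) (Inl ` preS e)"
proof -
  obtain t H where e: "e = UTr t H" by (cases e)
  have "(\<forall>p. p |\<in>| H \<longrightarrow> uplc N m p) \<and> CO (usyn N) (Inl ` fset H) \<and>
       t \<in> trans N \<and> pre N t = image_mset fS (mset_set (fset H))"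
    using assms unfolding e by (blast elim: utrE)
  then show "fT e \<in> trans N" "pre N (fT e) = image_mset fS (upre e)" "\<And>p. p \<in> preS e \<Longrightarrow> uplc N m p"
     "CO (usyn N) (Inl ` preS e)"
    unfolding e preS_def by simp_all
qed

lemma utr_nonempty:
  assumes w: "wf_net N" and u: "utr N m e"
  shows "preS e \<noteq> {}" "postS N e \<noteq> {}"
proof -
  have t: "fT e \<in> trans N" using utr_facts[OF u] by blast
  then have ne: "pre N (fT e) \<noteq> {#}" "post N (fT e) \<noteq> {#}" using w t unfolding wf_net_def by auto
  then show "preS e \<noteq> {}" using utr_facts(2)[OF u] upre_eq[of e] by auto
  from ne obtain a where "a \<in># post N (fT e)" by blast
  then have "1 \<le> count (post N (fT e)) a" by simp
  then have "UPl a (Some e) 1 \<in> postS N e" by (simp add: postS_iff)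
  then show "postS N e \<noteq> {}" by blast
qed

lemma valid:
  assumes c: "config N m C" and p: "p \<in> Mk N m C"
  shows "uplc N m p"
proof -
  have "p \<in> Ini m \<or> (\<exists>e\<in>C. p \<in> postS N e)" using p Mk_iff by blast
  then show ?thesis
  proof
    assume "p \<in> Ini m"
    then show ?thesis unfolding Ini_def pairs_def by (auto intro: uplc_utr.init)
  next
    assume "\<exists>e\<in>C. p \<in> postS N e"
    then obtain e where e: "e \<in> C" "p \<in> postS N e" by blast
    then have u: "utr N m e" using configD(2)[OF c] by blast
    obtain t H where eq: "e = UTr t H" by (cases e)
    from e(2) obtain a i where "p = UPl a (Some e) i" "1 \<le> i" "i \<le> count (post N t) a"
      unfolding postS_eq pairs_def eq by auto
    then show ?thesis using u eq by (auto intro: uplc_utr.postp)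
  qed
qed

lemma msplit:
  assumes "finite A" "finite B" "mset_set A = mset_set B + m3"
  shows "B \<subseteq> A \<and> m3 = mset_set (A - B)"
proof -
  have "mset_set B \<subseteq># mset_set A" using assms(3) by simp
  then have s: "B \<subseteq> A" using assms(1,2) by simp
  have "m3 = mset_set A - mset_set B" using assms(3) by simp
  also have "\<dots> = mset_set (A - B)" using mset_set_Diff[OF assms(1) s] by simp
  finally show ?thesis using s by blast
qed

lemma lift_sub:
  "A \<subseteq># image_mset f B \<Longrightarrow> \<exists>X. X \<subseteq># B \<and> image_mset f X = A"
proof (induction B arbitrary: A)
  case empty then show ?case by auto
next
  case (add b B)
  show ?case
  proof (cases "f b \<in># A")
    case True
    have "add_mset (f b) (A - {#f b#}) \<subseteq># add_mset (f b) (image_mset f B)"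
      using add.prems insert_DiffM[OF True] by simp
    then have "A - {#f b#} \<subseteq># image_mset f B"
      by (rule iffD1[OF mset_subset_eq_add_mset_cancel])
    then obtain X where "X \<subseteq># B" "image_mset f X = A - {#f b#}" using add.IH by blast
    have h1: "add_mset b X \<subseteq># add_mset b B" using \<open>X \<subseteq># B\<close> by simp
    have h2: "image_mset f (add_mset b X) = add_mset (f b) (A - {#f b#})"
      using \<open>image_mset f X = A - {#f b#}\<close> by simp
    have h3: "add_mset (f b) (A - {#f b#}) = A" using True by (rule insert_DiffM)
    have "image_mset f (add_mset b X) = A" using h2 h3 by (rule trans)
    then show ?thesis using h1 by (intro exI[of _ "add_mset b X"] conjI)
  next
    case False
    have "A \<subseteq># image_mset f B"
    proof (rule mset_subset_eqI)
      fix a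
      have "count A a \<le> count (image_mset f (add_mset b B)) a"
        using add.prems by (rule mset_subset_eq_count)
      then have h: "count A a \<le> count (add_mset (f b) (image_mset f B)) a" by simp
      show "count A a \<le> count (image_mset f B) a"
      proof (cases "a = f b")
        case True
        then have "count A a = 0" using False by (simp add: not_in_iff)
        then show ?thesis by simp
      next
        case False
        then show ?thesis using h by simp
      qed
    qed
    then obtain X where "X \<subseteq># B" "image_mset f X = A" using add.IH by blast
    moreover have "X \<subseteq># add_mset b B"
    proof (rule mset_subset_eqI)
      fix a
      have "count X a \<le> count B a" using \<open>X \<subseteq># B\<close> by (rule mset_subset_eq_count)
      then show "count X a \<le> count (add_mset b B) a" by simp
    qed
    ultimately show ?thesis by (intro exI[of _ X] conjI)
  qed
qed



definition HC :: "('s, 't) net \<Rightarrow> 's multiset \<Rightarrow> ('s, 't) utrans set \<Rightarrow> (('s, 't) uplace + ('s, 't) utrans) set" where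
  "HC N m C = Inl ` (Ini m \<union> (\<Union>e\<in>C. postS N e)) \<union> Inr ` C"

lemma set_upre: "set_mset (upre t) = preS t"
  by (simp add: upre_eq finite_preS)

lemma prec_usyn: "(x, y) \<in> prec (usyn N) \<longleftrightarrow>
   (\<exists>a t. x = Inl a \<and> y = Inr t \<and> a \<in> preS t) \<or> (\<exists>a t. x = Inr t \<and> y = Inl a \<and> a \<in> postS N t)"
  unfolding prec_def usyn_def postS_def by (auto simp: set_upre[symmetric])

lemma back1:
  assumes c: "config N m C" and yz: "(y, z) \<in> prec (usyn N)" and z: "z \<in> HC N m C"
  shows "y \<in> HC N m C"
proof -
  note cd = configD[OF c]
  from yz[unfolded prec_usyn] show ?thesis
  proof (elim disjE exE conjE)
    fix a t assume eq: "y = Inl a" "z = Inr t" and a: "a \<in> preS t"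
    from z eq have "t \<in> C" unfolding HC_def by auto
    then have "a \<in> Ini m \<or> (\<exists>e'\<in>C. a \<in> postS N e')" using cd(3) a by blast
    then show ?thesis using eq unfolding HC_def by blast
  next
    fix a t assume eq: "y = Inr t" "z = Inl a" and a: "a \<in> postS N t"
    from z eq have "a \<in> Ini m \<or> (\<exists>e\<in>C. a \<in> postS N e)" unfolding HC_def by auto
    then have "t \<in> C"
    proof
      assume "a \<in> Ini m" then show ?thesis using postS_Ini a by blast
    next
      assume "\<exists>e\<in>C. a \<in> postS N e"
      then obtain e where "e \<in> C" "a \<in> postS N e" by blast
      then show ?thesis using postS_disj[OF a] by metis
    qed
    then show ?thesis using eq unfolding HC_def by blast
  qed
qed

lemma backc:
  assumes c: "config N m C" and xz: "(x, z) \<in> causal (usyn N)" and z: "z \<in> HC N m C"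
  shows "x \<in> HC N m C"
  using xz[unfolded causal_def] z
proof (induction rule: converse_rtrancl_induct)
  case base then show ?case .
next
  case (step y y')
  then show ?case using back1[OF c] by blast
qed

lemma Mk_HC: "p \<in> Mk N m C \<Longrightarrow> Inl p \<in> HC N m C"
  unfolding HC_def Mk_def by blast

lemma HC_Inr: "Inr t \<in> HC N m C \<Longrightarrow> t \<in> C"
  unfolding HC_def by auto

lemma notcaus:
  assumes c: "config N m C" and p: "p \<in> Mk N m C" and q: "q \<in> Mk N m C" and ne: "p \<noteq> q"
  shows "(Inl p, Inl q) \<notin> causal (usyn N)"
proof
  assume "(Inl p, Inl q) \<in> causal (usyn N)"
  then have "(Inl p, Inl q) \<in> (prec (usyn N))\<^sup>*" unfolding causal_def .
  then show False
  proof (cases rule: converse_rtranclE)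
    case base then show False using ne by simp
  next
    case (step w)
    then obtain t where w: "w = Inr t" "p \<in> preS t" unfolding prec_usyn by blast
    have "(w, Inl q) \<in> causal (usyn N)" using step(2) unfolding causal_def .
    then have "w \<in> HC N m C" using backc[OF c] Mk_HC[OF q] by blast
    then have "t \<in> C" using w HC_Inr by blast
    then show False using p w(2) unfolding Mk_def by blast
  qed
qed

lemma caus_tr:
  assumes c: "config N m C" and p: "p \<in> Mk N m C" and "(Inr t, Inl p) \<in> causal (usyn N)"
  shows "t \<in> C"
  using backc[OF c assms(3) Mk_HC[OF p]] HC_Inr by blast

lemma CO_Mk:
  fixes N :: "('s, 't) net"
  assumes c: "config N m C" and S: "S \<subseteq> Mk N m C"
  shows "CO (usyn N) (Inl ` S)"
  unfolding CO_def
proof (intro conjI ballI impI)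
  show "finite {t \<in> trans (usyn N). \<exists>x\<in>Inl ` S. (Inr t, x) \<in> causal (usyn N)}"
  proof (rule finite_subset)
    show "{t \<in> trans (usyn N). \<exists>x\<in>Inl ` S. (Inr t, x) \<in> causal (usyn N)} \<subseteq> C"
      using caus_tr[OF c] S by blast
    show "finite C" using configD(1)[OF c] .
  qed
next
  fix x y :: "('s, 't) uplace + ('s, 't) utrans"
  assume x: "x \<in> Inl ` S" and y: "y \<in> Inl ` S" and ne: "x \<noteq> y"
  then obtain p q where pq: "x = Inl p" "y = Inl q" "p \<in> Mk N m C" "q \<in> Mk N m C" "p \<noteq> q"
    using S by blast
  have n1: "(x, y) \<notin> causal (usyn N)" using notcaus[OF c pq(3) pq(4) pq(5)] pq(1,2) by simp
  have n2: "(y, x) \<notin> causal (usyn N)" using notcaus[OF c pq(4) pq(3)] pq by simp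
  have n3: "\<not> conflict (usyn N) x y"
  proof
    assume "conflict (usyn N) x y"
    then obtain t1 t2 where t: "(Inr t1, x) \<in> causal (usyn N)" "(Inr t2, y) \<in> causal (usyn N)"
      "t1 \<noteq> t2" "set_mset (pre (usyn N) t1) \<inter> set_mset (pre (usyn N) t2) \<noteq> {}"
      unfolding conflict_def by blast
    have "t1 \<in> C" using caus_tr[OF c pq(3)] t(1) pq(1) by simp
    moreover have "t2 \<in> C" using caus_tr[OF c pq(4)] t(2) pq(2) by simp
    moreover have "preS t1 \<inter> preS t2 \<noteq> {}" using t(4) by (simp add: usyn_def set_upre)
    ultimately show False using configD(4)[OF c] t(3) by blast
  qed
  show "co (usyn N) x y" unfolding co_def using ne n1 n2 n3 by blast
qed



lemma config_empty: "config N m {}"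
  unfolding config_def by simp

lemma Mk_empty: "Mk N m {} = Ini m"
  unfolding Mk_def by simp

lemma rev_simps:
  "trans (rev_net (unfold N m)) = Inl ` {e. utr N m e} \<union> Inr ` {e. utr N m e}"
  "pre (rev_net (unfold N m)) (Inl e) = upre e"
  "pre (rev_net (unfold N m)) (Inr e) = upost N e"
  "post (rev_net (unfold N m)) (Inl e) = upost N e"
  "post (rev_net (unfold N m)) (Inr e) = upre e"
  unfolding rev_net_def unfold_def by simp_all

lemma rev_inv:
  assumes w: "wf_net N" and r: "reach (rev_net (unfold N m)) (uinit m) M"
  shows "\<exists>C. config N m C \<and> M = mset_set (Mk N m C)"
  using r[unfolded reach_def]
proof (induction rule: rtranclp_induct)
  case base
  show ?case using config_empty Mk_empty uinit_eq by metis
next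
  case (step M M')
  from step.IH obtain C where c: "config N m C" and M: "M = mset_set (Mk N m C)" by blast
  note cd = configD[OF c]
  have fM: "finite (Mk N m C)" using finite_Mk[OF cd(1)] .
  from step.hyps(2) obtain x m3 where x: "x \<in> trans (rev_net (unfold N m))"
    "M = pre (rev_net (unfold N m)) x + m3" "M' = post (rev_net (unfold N m)) x + m3"
    unfolding step_def fires_def by blast
  from x(1) obtain e where u: "utr N m e" and xe: "x = Inl e \<or> x = Inr e"
    unfolding rev_simps by blast
  from xe show ?case
  proof
    assume xi: "x = Inl e"
    have eq: "mset_set (Mk N m C) = mset_set (preS e) + m3"
      using x(2) M xi by (simp add: rev_simps upre_eq)
    from msplit[OF fM finite_preS eq] have s: "preS e \<subseteq> Mk N m C" and m3: "m3 = mset_set (Mk N m C - preS e)"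
      by blast+
    have "e \<notin> C"
    proof
      assume "e \<in> C"
      then have "preS e \<inter> Mk N m C = {}" unfolding Mk_def by blast
      then show False using s utr_nonempty(1)[OF w u] by blast
    qed
    from fwd[OF c u this s] have f: "config N m (insert e C)" "postS N e \<inter> Mk N m C = {}"
      "Mk N m (insert e C) = (Mk N m C - preS e) \<union> postS N e" by blast+
    have "M' = mset_set (postS N e) + mset_set (Mk N m C - preS e)"
      using x(3) xi m3 by (simp add: rev_simps upost_eq)
    also have "\<dots> = mset_set (Mk N m (insert e C))"
      unfolding f(3) using f(2) fM finite_postS
      by (subst mset_set_Union) (auto simp: add.commute)
    finally show ?thesis using f(1) by blast
  next
    assume xi: "x = Inr e"
    have eq: "mset_set (Mk N m C) = mset_set (postS N e) + m3"
      using x(2) M xi by (simp add: rev_simps upost_eq)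
    from msplit[OF fM finite_postS eq] have s: "postS N e \<subseteq> Mk N m C" and m3: "m3 = mset_set (Mk N m C - postS N e)"
      by blast+
    obtain p where p: "p \<in> postS N e" using utr_nonempty(2)[OF w u] by blast
    then have "p \<in> Mk N m C" using s by blast
    then have "p \<in> Ini m \<or> (\<exists>e'\<in>C. p \<in> postS N e')" by (simp add: Mk_iff)
    then have eC: "e \<in> C" using p postS_Ini postS_disj by metis
    from back_step[OF c eC s] have f: "config N m (C - {e})" "preS e \<inter> Mk N m C = {}"
      "Mk N m (C - {e}) = (Mk N m C - postS N e) \<union> preS e" by blast+
    have "M' = mset_set (preS e) + mset_set (Mk N m C - postS N e)"
      using x(3) xi m3 by (simp add: rev_simps upre_eq)
    also have "\<dots> = mset_set (Mk N m (C - {e}))"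
      unfolding f(3) using f(2) fM finite_preS
      by (subst mset_set_Union) (auto simp: add.commute)
    finally show ?thesis using f(1) by blast
  qed
qed

lemma fold_config:
  assumes c: "config N m C"
  shows "reach N m (image_mset fS (mset_set (Mk N m C)))"
  using c
proof (induction "card C" arbitrary: C rule: less_induct)
  case less
  note c = less.prems
  note cd = configD[OF c]
  show ?case
  proof (cases "C = {}")
    case True
    then show ?thesis unfolding reach_def
      by (simp add: Mk_empty uinit_eq[symmetric] fold_uinit)
  next
    case False
    define k where "k = Max (size ` C)"
    have "k \<in> size ` C" unfolding k_def using False cd(1) by simp
    then obtain e where eC: "e \<in> C" and ek: "size e = k" by blast
    have mx: "\<And>e'. e' \<in> C \<Longrightarrow> size e' \<le> size e" unfolding ek k_def using cd(1) by simp
    have d: "\<And>p e'. p \<in> postS N e \<Longrightarrow> e' \<in> C \<Longrightarrow> p \<notin> preS e'"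
    proof
      fix p e' assume "p \<in> postS N e" "e' \<in> C" "p \<in> preS e'"
      then have "size e < size p" "size p < size e'" "size e' \<le> size e"
        using postS_size preS_size mx by blast+
      then show False by simp
    qed
    from remove[OF c eC d] have r: "config N m (C - {e})" "preS e \<subseteq> Mk N m (C - {e})" by blast+
    have u: "utr N m e" using cd(2)[OF eC] .
    have cardl: "card (C - {e}) < card C" by (rule card_Diff1_less[OF cd(1) eC])
    have IH: "reach N m (image_mset fS (mset_set (Mk N m (C - {e}))))"
      using less.hyps[OF cardl r(1)] .
    from fwd[OF r(1) u _ r(2)] have f: "postS N e \<inter> Mk N m (C - {e}) = {}"
      "Mk N m (insert e (C - {e})) = (Mk N m (C - {e}) - preS e) \<union> postS N e" by blast+
    have ie: "insert e (C - {e}) = C" using eC by blast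
    define A where "A = Mk N m (C - {e})"
    have fA: "finite A" unfolding A_def using finite_Mk r(1) configD(1) by blast
    have MC: "Mk N m C = (A - preS e) \<union> postS N e" using f(2) ie A_def by simp
    have A1: "mset_set A = mset_set (preS e) + mset_set (A - preS e)"
    proof -
      have "A = preS e \<union> (A - preS e)" using r(2) A_def by blast
      then have "mset_set A = mset_set (preS e \<union> (A - preS e))" by simp
      also have "\<dots> = mset_set (preS e) + mset_set (A - preS e)"
        using fA finite_preS by (intro mset_set_Union) auto
      finally show ?thesis .
    qed
    have A2: "mset_set (Mk N m C) = mset_set (A - preS e) + mset_set (postS N e)"
      unfolding MC using fA finite_postS f(1) A_def by (intro mset_set_Union) auto
    have "fires N (image_mset fS (mset_set A)) (fT e) (image_mset fS (mset_set (Mk N m C)))"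
      unfolding fires_def
    proof (intro conjI exI)
      show "fT e \<in> trans N" using utr_facts(1)[OF u] .
      show "image_mset fS (mset_set A) = pre N (fT e) + image_mset fS (mset_set (A - preS e))"
        using A1 utr_facts(2)[OF u] by (simp add: upre_eq)
      show "image_mset fS (mset_set (Mk N m C)) = post N (fT e) + image_mset fS (mset_set (A - preS e))"
        using A2 fold_upost[of N e] by (simp add: upost_eq add.commute)
    qed
    then have "step N (image_mset fS (mset_set A)) (image_mset fS (mset_set (Mk N m C)))"
      unfolding step_def by blast
    then show ?thesis using IH unfolding reach_def A_def by simp
  qed
qed

lemma sub_set_mset:
  assumes "X \<subseteq># mset_set A" "finite A"
  shows "X = mset_set (set_mset X)"
proof (rule multiset_eqI)
  fix a
  have "count X a \<le> count (mset_set A) a" using assms(1) by (rule mset_subset_eq_count)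
  also have "\<dots> \<le> 1" by (simp add: count_mset_set')
  finally have "count X a \<le> 1" .
  show "count X a = count (mset_set (set_mset X)) a"
  proof (cases "a \<in># X")
    case True
    then have h1: "0 < count X a" by simp
    have h2: "count (mset_set (set_mset X)) a = 1" using True by simp
    show ?thesis using h1 h2 \<open>count X a \<le> 1\<close> by linarith
  next
    case False
    then show ?thesis by (simp add: not_in_iff)
  qed
qed

lemma fwd_reach:
  assumes w: "wf_net N" and r: "reach N m m'"
  shows "\<exists>C. config N m C \<and> reach (rev_net (unfold N m)) (uinit m) (mset_set (Mk N m C))
      \<and> image_mset fS (mset_set (Mk N m C)) = m'"
  using r[unfolded reach_def]
proof (induction rule: rtranclp_induct)
  case base
  show ?case using config_empty Mk_empty uinit_eq fold_uinit unfolding reach_def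
    by (metis rtranclp.rtrancl_refl)
next
  case (step M M')
  from step.IH obtain C where c: "config N m C"
    and rr: "reach (rev_net (unfold N m)) (uinit m) (mset_set (Mk N m C))"
    and M: "image_mset fS (mset_set (Mk N m C)) = M" by blast
  note cd = configD[OF c]
  have fM: "finite (Mk N m C)" using finite_Mk[OF cd(1)] .
  from step.hyps(2) obtain t m3 where t: "t \<in> trans N" "M = pre N t + m3" "M' = post N t + m3"
    unfolding step_def fires_def by blast
  have "pre N t \<subseteq># image_mset fS (mset_set (Mk N m C))" using M t(2) by simp
  from lift_sub[OF this] obtain X where X: "X \<subseteq># mset_set (Mk N m C)" "image_mset fS X = pre N t"
    by blast
  define S where "S = set_mset X"
  have XS: "X = mset_set S" unfolding S_def using sub_set_mset[OF X(1) fM] .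
  have fS': "finite S" unfolding S_def by simp
  have SM: "S \<subseteq> Mk N m C" unfolding S_def using set_mset_mono[OF X(1)] fM by simp
  have m3: "m3 = image_mset fS (mset_set (Mk N m C - S))"
  proof -
    have "m3 = image_mset fS (mset_set (Mk N m C)) - image_mset fS X" using M t(2) X(2) by simp
    also have "\<dots> = image_mset fS (mset_set (Mk N m C) - X)" by (rule image_mset_Diff[OF X(1), symmetric])
    also have "\<dots> = image_mset fS (mset_set (Mk N m C - S))" using mset_set_Diff[OF fM SM] XS by simp
    finally show ?thesis .
  qed
  define e where "e = UTr t (Abs_fset S)"
  have HS: "fset (Abs_fset S) = S" using fS' by (simp add: Abs_fset_inverse)
  have preSe: "preS e = S" unfolding e_def preS_def using HS by simp
  have fTe: "fT e = t" unfolding e_def by simp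
  have u: "utr N m e" unfolding e_def
  proof (rule uplc_utr.tr)
    show "\<forall>p. p |\<in>| Abs_fset S \<longrightarrow> uplc N m p" using HS SM valid[OF c] by auto
    show "CO (usyn N) (Inl ` fset (Abs_fset S))" using HS CO_Mk[OF c SM] by simp
    show "t \<in> trans N" by fact
    show "pre N t = image_mset fS (mset_set (fset (Abs_fset S)))" using HS X(2) XS by simp
  qed
  have Sne: "S \<noteq> {}" using utr_nonempty(1)[OF w u] preSe by simp
  have "e \<notin> C"
  proof
    assume "e \<in> C"
    then have "S \<inter> Mk N m C = {}" using preSe unfolding Mk_def by blast
    then show False using SM Sne by blast
  qed
  from fwd[OF c u this] SM preSe have f: "config N m (insert e C)" "postS N e \<inter> Mk N m C = {}"
      "Mk N m (insert e C) = (Mk N m C - S) \<union> postS N e" by auto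
  have A1: "mset_set (Mk N m C) = mset_set S + mset_set (Mk N m C - S)"
  proof -
    have "Mk N m C = S \<union> (Mk N m C - S)" using SM by blast
    then have "mset_set (Mk N m C) = mset_set (S \<union> (Mk N m C - S))" by simp
    also have "\<dots> = mset_set S + mset_set (Mk N m C - S)"
      using fM fS' by (intro mset_set_Union) auto
    finally show ?thesis .
  qed
  have A2: "mset_set (Mk N m (insert e C)) = mset_set (postS N e) + mset_set (Mk N m C - S)"
    unfolding f(3) using fM finite_postS f(2) by (subst mset_set_Union) (auto simp: add.commute)
  have "fires (rev_net (unfold N m)) (mset_set (Mk N m C)) (Inl e) (mset_set (Mk N m (insert e C)))"
    unfolding fires_def
  proof (intro conjI exI)
    show "Inl e \<in> trans (rev_net (unfold N m))" using u by (simp add: rev_simps)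
    show "mset_set (Mk N m C) = pre (rev_net (unfold N m)) (Inl e) + mset_set (Mk N m C - S)"
      using A1 preSe by (simp add: rev_simps upre_eq)
    show "mset_set (Mk N m (insert e C)) = post (rev_net (unfold N m)) (Inl e) + mset_set (Mk N m C - S)"
      using A2 by (simp add: rev_simps upost_eq)
  qed
  then have st: "step (rev_net (unfold N m)) (mset_set (Mk N m C)) (mset_set (Mk N m (insert e C)))"
    unfolding step_def by blast
  have rr': "reach (rev_net (unfold N m)) (uinit m) (mset_set (Mk N m (insert e C)))"
    unfolding reach_def by (rule rtranclp.rtrancl_into_rtrancl[OF rr[unfolded reach_def] st])
  have "image_mset fS (mset_set (Mk N m (insert e C))) = post N t + m3"
    using A2 m3 fold_upost[of N e] fTe by (simp add: upost_eq)
  then show ?case using f(1) rr' t(3) by blast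
qed

theorem mainTheorem13:
  fixes N :: "('s, 't) net" and m m' :: "'s multiset"
  assumes "wf_net N" and "is_marking N m" and "is_marking N m'"
  shows "reach N m m' \<longleftrightarrow>
    (\<exists>m''. is_marking (unfold N m) m''
       \<and> reach (rev_net (unfold N m)) (uinit m) m''
       \<and> m' = image_mset fS m'')"
proof
  assume "reach N m m'"
  from fwd_reach[OF assms(1) this] obtain C where c: "config N m C"
    and rr: "reach (rev_net (unfold N m)) (uinit m) (mset_set (Mk N m C))"
    and f: "image_mset fS (mset_set (Mk N m C)) = m'" by blast
  have fM: "finite (Mk N m C)" using finite_Mk configD(1)[OF c] by blast
  have "is_marking (unfold N m) (mset_set (Mk N m C))"
    unfolding is_marking_def unfold_def using fM valid[OF c] by auto
  then show "\<exists>m''. is_marking (unfold N m) m''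
       \<and> reach (rev_net (unfold N m)) (uinit m) m'' \<and> m' = image_mset fS m''"
    using rr f by blast
next
  assume "\<exists>m''. is_marking (unfold N m) m''
       \<and> reach (rev_net (unfold N m)) (uinit m) m'' \<and> m' = image_mset fS m''"
  then obtain m'' where r: "reach (rev_net (unfold N m)) (uinit m) m''" and f: "m' = image_mset fS m''"
    by blast
  from rev_inv[OF assms(1) r] obtain C where "config N m C" "m'' = mset_set (Mk N m C)" by blast
  then show "reach N m m'" using fold_config f by blast
qed

end
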